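(* For all integers $t\ge 4$ and $r\ge 3$, $C_r(n,M_t)=\Omega\!\left(n^{\frac{1}{2r+1}}\right)$ as $n\to\infty$, where $M_t$ is the $r$-graph consisting of $t$ pairwise disjoint edges.
   Context: An $r$-graph is an $r$-uniform hypergraph; $K_n^{(r)}$ is the complete $r$-graph on $n$ vertices. A copy of an $r$-graph $H$ in $K_n^{(r)}$ is a subhypergraph isomorphic to $H$. An $(n,r,H)$-local coloring with $k$ colors is a family of edge-colorings $f_v:E(K_n^{(r)})\to[k]$, one per vertex $v$, such that for every copy $T$ of $H$ there is $u\in V(T)$ with $f_u$ injective on $E(T)$. $C_r(n,H)$ is the minimum such $k$. *)

theory Defs
  imports Complex_Main
begin

text \<open>Vertices of K_n^(r) are 0..n-1; an edge is an r-subset of them.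
  An r-graph H is given by its edge set (a set of vertex sets) over type 'a;
  its vertex set is the union of its edges.\<close>

definition complete_edges :: "nat \<Rightarrow> nat \<Rightarrow> nat set set" where
  "complete_edges n r = {e. e \<subseteq> {..<n} \<and> card e = r}"

definition hverts :: "'a set set \<Rightarrow> 'a set" where
  "hverts H = \<Union>H"

text \<open>A copy of H in K_n^(r): the image of H under an injective vertex map
  into {..<n} (its edges are then automatically edges of K_n^(r) whenever H is an r-graph).\<close>
definition is_copy :: "nat \<Rightarrow> nat \<Rightarrow> 'a set set \<Rightarrow> nat set set \<Rightarrow> bool" where
  "is_copy n r H T \<longleftrightarrow> T \<subseteq> complete_edges n r \<and>
     (\<exists>\<phi>. inj_on \<phi> (hverts H) \<and> \<phi> ` hverts H \<subseteq> {..<n} \<and> T = (\<lambda>e. \<phi> ` e) ` H)"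

definition local_coloring :: "nat \<Rightarrow> nat \<Rightarrow> 'a set set \<Rightarrow> nat \<Rightarrow> (nat \<Rightarrow> nat set \<Rightarrow> nat) \<Rightarrow> bool" where
  "local_coloring n r H k f \<longleftrightarrow>
     (\<forall>v<n. \<forall>e\<in>complete_edges n r. f v e < k) \<and>
     (\<forall>T. is_copy n r H T \<longrightarrow> (\<exists>u\<in>hverts T. inj_on (f u) T))"

definition C_local :: "nat \<Rightarrow> nat \<Rightarrow> 'a set set \<Rightarrow> nat" where
  "C_local r n H = (LEAST k. \<exists>f. local_coloring n r H k f)"

definition matching :: "nat \<Rightarrow> nat \<Rightarrow> nat set set" where
  "matching r t = (\<lambda>i. {r*i..<r*i + r}) ` {..<t}"

end

theory Submission imports Defs "HOL-Library.FuncSet" begin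

lemma ival: "{a..<a+r::nat} = (+) a ` {..<r}"
proof
  show "{a..<a+r} \<subseteq> (+) a ` {..<r}"
  proof
    fix x assume "x \<in> {a..<a+r}"
    then have "x = a + (x - a)" "x - a < r" by auto
    then show "x \<in> (+) a ` {..<r}" by blast
  qed
qed auto

lemma divmod_blk: "0 < (r::nat) \<Longrightarrow> m < r \<Longrightarrow> (r*a+m) div r = a \<and> (r*a+m) mod r = m"
  by simp

lemma blk_bound: "(l::nat) < M \<Longrightarrow> m < r \<Longrightarrow> r*l+m < M*r"
proof -
  assume "l < M" "m < r"
  then have "r*l + m < r*l + r" by simp
  also have "\<dots> = r*(l+1)" by simp
  also have "\<dots> \<le> r*M" using \<open>l<M\<close> by (intro mult_le_mono2) simp
  finally show ?thesis by (simp add: mult.commute)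
qed

lemma copy_blocks:
  fixes \<beta> \<sigma> :: "nat \<Rightarrow> nat"
  assumes r: "r \<ge> 1" and bi: "inj_on \<beta> {..<M*r}" and bs: "\<beta> ` {..<M*r} \<subseteq> {..<n}"
    and si: "inj_on \<sigma> {..<t}" and ss: "\<sigma> ` {..<t} \<subseteq> {..<M}"
  shows "is_copy n r (matching r t) ((\<lambda>l. \<beta> ` {r*\<sigma> l..<r*\<sigma> l+r}) ` {..<t})"
proof -
  define \<phi> where "\<phi> x = \<beta> (r * \<sigma> (x div r) + x mod r)" for x
  have r0: "0 < r" using r by simp
  have hv: "hverts (matching r t) = {..<r*t}"
  proof
    show "hverts (matching r t) \<subseteq> {..<r*t}"
      unfolding hverts_def matching_def
    proof
      fix x assume "x \<in> \<Union> ((\<lambda>i. {r*i..<r*i+r}) ` {..<t})"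
      then obtain i where "i<t" "x \<in> {r*i..<r*i+r}" by auto
      then show "x \<in> {..<r*t}" using blk_bound[of i t "x - r*i" r] by (auto simp: mult.commute)
    qed
    show "{..<r*t} \<subseteq> hverts (matching r t)"
      unfolding hverts_def matching_def
    proof
      fix x assume "x \<in> {..<r*t}"
      then have "x div r < t" by (simp add: less_mult_imp_div_less mult.commute)
      moreover have "x \<in> {r*(x div r)..<r*(x div r)+r}"
      proof -
        have "r*(x div r) + x mod r = x" by (rule mult_div_mod_eq)
        moreover have "x mod r < r" using r0 by simp
        ultimately show ?thesis by (simp only: atLeastLessThan_iff) linarith
      qed
      ultimately show "x \<in> \<Union> ((\<lambda>i. {r*i..<r*i+r}) ` {..<t})" by blast
    qed
  qed
  have key: "x < r*t \<Longrightarrow> r * \<sigma> (x div r) + x mod r < M*r" for x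
  proof -
    assume "x < r*t"
    then have "x div r < t" by (simp add: less_mult_imp_div_less mult.commute)
    then have "\<sigma> (x div r) < M" using ss by auto
    then show ?thesis using blk_bound r0 by simp
  qed
  have inj: "inj_on \<phi> {..<r*t}"
  proof
    fix x y assume x: "x \<in> {..<r*t}" and y: "y \<in> {..<r*t}" and e: "\<phi> x = \<phi> y"
    have "r * \<sigma> (x div r) + x mod r = r * \<sigma> (y div r) + y mod r"
      using e key x y bi unfolding \<phi>_def inj_on_def by auto
    then have "\<sigma> (x div r) = \<sigma> (y div r) \<and> x mod r = y mod r"
      using divmod_blk[OF r0, of "x mod r" "\<sigma> (x div r)"] divmod_blk[OF r0, of "y mod r" "\<sigma> (y div r)"] r0
      by (metis mod_less_divisor)
    moreover have "x div r < t" "y div r < t" using x y by (simp_all add: less_mult_imp_div_less mult.commute)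
    ultimately have "x div r = y div r \<and> x mod r = y mod r" using si unfolding inj_on_def by auto
    then show "x = y" by (metis div_mult_mod_eq)
  qed
  have img: "\<phi> ` {..<r*t} \<subseteq> {..<n}" using key bs unfolding \<phi>_def by auto
  have blkimg: "\<phi> ` {r*i..<r*i+r} = \<beta> ` {r*\<sigma> i..<r*\<sigma> i+r}" if "i < t" for i
  proof -
    have "\<phi> ` {r*i..<r*i+r} = \<phi> ` ((+) (r*i) ` {..<r})" by (simp add: ival)
    also have "\<dots> = (\<lambda>m. \<beta> (r*\<sigma> i + m)) ` {..<r}"
      unfolding image_image using divmod_blk[OF r0] by (intro image_cong) (auto simp: \<phi>_def)
    also have "\<dots> = \<beta> ` ((+) (r*\<sigma> i) ` {..<r})" by (simp add: image_image)
    also have "\<dots> = \<beta> ` {r*\<sigma> i..<r*\<sigma> i+r}" by (simp add: ival)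
    finally show ?thesis .
  qed
  have Teq: "(\<lambda>l. \<beta> ` {r*\<sigma> l..<r*\<sigma> l+r}) ` {..<t} = (\<lambda>e. \<phi> ` e) ` matching r t"
    unfolding matching_def image_image by (rule image_cong[OF refl]) (simp add: blkimg)
  have edges: "\<beta> ` {r*\<sigma> l..<r*\<sigma> l+r} \<in> complete_edges n r" if "l < t" for l
  proof -
    have sl: "\<sigma> l < M" using ss that by auto
    have sub: "{r*\<sigma> l..<r*\<sigma> l+r} \<subseteq> {..<M*r}"
    proof
      fix x assume x: "x \<in> {r*\<sigma> l..<r*\<sigma> l+r}"
      then have "x = r*\<sigma> l + (x - r*\<sigma> l)" "x - r*\<sigma> l < r" by auto
      then show "x \<in> {..<M*r}" using blk_bound[OF sl, of "x - r*\<sigma> l" r] by simp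
    qed
    have "card (\<beta> ` {r*\<sigma> l..<r*\<sigma> l+r}) = r"
      using card_image[OF inj_on_subset[OF bi sub]] by simp
    moreover have "\<beta> ` {r*\<sigma> l..<r*\<sigma> l+r} \<subseteq> {..<n}" using sub bs by blast
    ultimately show ?thesis by (simp add: complete_edges_def)
  qed
  have "(\<lambda>l. \<beta> ` {r*\<sigma> l..<r*\<sigma> l+r}) ` {..<t} \<subseteq> complete_edges n r"
    using edges by blast
  then show ?thesis unfolding is_copy_def
    using Teq inj img hv by auto
qed


lemma no_coloring:
  fixes f :: "nat \<Rightarrow> nat set \<Rightarrow> nat"
  assumes r: "r \<ge> 1" and t: "t \<ge> 4" and k: "k \<ge> 1"
    and lc: "local_coloring n r (matching r t) k f"
  shows "n < 2*k*r + 4*k*r*(k^(2*r)+t-3)"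
proof (rule ccontr)
  assume "\<not> ?thesis"
  hence nbig: "2*k*r + 4*k*r*(k^(2*r)+t-3) \<le> n" by simp
  have r0: "0 < r" using r by simp
  have fbound: "\<And>v e. v < n \<Longrightarrow> e \<in> complete_edges n r \<Longrightarrow> f v e < k"
    using lc by (simp add: local_coloring_def)
  have copyprop: "\<And>T. is_copy n r (matching r t) T \<Longrightarrow> \<exists>u\<in>hverts T. inj_on (f u) T"
    using lc unfolding local_coloring_def by blast
  define D where "D i = {r*i..<r*i+r}" for i
  define B where "B = {2*k*r..<n}"
  define Pairs where "Pairs = {(j,i). j < i \<and> i < 2*k}"
  define Bp where "Bp p = {u\<in>B. f u (D (fst p)) = f u (D (snd p))}" for p
  have D_edge: "D i \<in> complete_edges n r" if "i < 2*k" for i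
  proof -
    have "r*i + r = r*(i+1)" by simp
    also have "\<dots> \<le> r*(2*k)" using that by (intro mult_le_mono2) simp
    finally have "r*i + r \<le> 2*k*r" by (simp add: mult.commute)
    then have "D i \<subseteq> {..<n}" using nbig unfolding D_def by auto
    then show ?thesis unfolding complete_edges_def D_def by auto
  qed
  have finP: "finite Pairs"
    by (rule finite_subset[of _ "{..<2*k} \<times> {..<2*k}"]) (auto simp: Pairs_def)
  have cardP: "card Pairs \<le> 4*k*k"
  proof -
    have "card Pairs \<le> card ({..<2*k} \<times> {..<2*k})"
      by (rule card_mono) (auto simp: Pairs_def)
    then show ?thesis by (simp add: card_cartesian_product)
  qed
  have P01: "(0,1) \<in> Pairs" using k by (simp add: Pairs_def)
  have finB: "finite B" by (simp add: B_def)
  have percount: "k \<le> card {p\<in>Pairs. u \<in> Bp p}" if u: "u \<in> B" for u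
  proof -
    define c where "c i = f u (D i)" for i
    define F where "F = {i. i<2*k \<and> (\<forall>j<i. c j \<noteq> c i)}"
    have un: "u < n" using u by (simp add: B_def)
    have "inj_on c F"
    proof
      fix x y assume "x \<in> F" "y \<in> F" "c x = c y"
      then show "x = y" unfolding F_def by (cases x y rule: linorder_cases) auto
    qed
    moreover have "c ` F \<subseteq> {..<k}" using fbound[OF un] D_edge by (auto simp: F_def c_def)
    ultimately have cF: "card F \<le> k" using card_inj_on_le[of c F "{..<k}"] by simp
    define G where "G = {..<2*k} - F"
    have "F \<subseteq> {..<2*k}" by (auto simp: F_def)
    then have cG: "card G = 2*k - card F" unfolding G_def by (simp add: card_Diff_subset finite_subset)
    define h where "h i = ((LEAST j. j<i \<and> c j = c i), i)" for i
    have "inj_on h G" by (rule inj_onI) (simp add: h_def)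
    moreover have "h ` G \<subseteq> {p\<in>Pairs. u \<in> Bp p}"
    proof
      fix p assume "p \<in> h ` G"
      then obtain i where i: "i \<in> G" "p = h i" by blast
      then have "\<exists>j. j<i \<and> c j = c i" "i < 2*k" by (auto simp: G_def F_def)
      then have "(LEAST j. j<i \<and> c j = c i) < i \<and> c (LEAST j. j<i \<and> c j = c i) = c i"
        using LeastI_ex[of "\<lambda>j. j<i \<and> c j = c i"] by blast
      then show "p \<in> {p\<in>Pairs. u \<in> Bp p}"
        using i \<open>i < 2*k\<close> u by (auto simp: h_def Pairs_def Bp_def c_def)
    qed
    moreover have "finite {p\<in>Pairs. u \<in> Bp p}" using finP by simp
    ultimately have "card G \<le> card {p\<in>Pairs. u \<in> Bp p}" by (rule card_inj_on_le)
    then show ?thesis using cG cF by simp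
  qed
  have dbl: "(\<Sum>p\<in>Pairs. card (Bp p)) = (\<Sum>u\<in>B. card {p\<in>Pairs. u \<in> Bp p})"
    using sum.swap_restrict[OF finP finB, of "\<lambda>_ _. 1::nat" "\<lambda>p u. f u (D (fst p)) = f u (D (snd p))"]
    by (simp add: Bp_def)
  obtain i j where ij: "i < j" "j < 2*k" and big: "card B \<le> 4*k*card (Bp (i,j))"
  proof -
    have "\<exists>p\<in>Pairs. card B \<le> 4*k*card (Bp p)"
    proof (rule ccontr)
      assume "\<not> ?thesis"
      then have lt: "\<forall>p\<in>Pairs. 4*k*card (Bp p) < card B" by auto
      have "(\<Sum>p\<in>Pairs. 4*k*card (Bp p)) < (\<Sum>p\<in>Pairs. card B)"
        using lt finP P01 by (intro sum_strict_mono) auto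
      also have "\<dots> = card Pairs * card B" by simp
      also have "\<dots> \<le> 4*k*k*card B" using cardP by simp
      finally have A: "(\<Sum>p\<in>Pairs. 4*k*card (Bp p)) < 4*k*k*card B" .
      have "(\<Sum>p\<in>Pairs. 4*k*card (Bp p)) = 4*k*(\<Sum>u\<in>B. card {p\<in>Pairs. u \<in> Bp p})"
        by (simp only: sum_distrib_left[symmetric] dbl)
      also have "\<dots> \<ge> 4*k*(\<Sum>u\<in>B. k)"
        using percount by (intro mult_le_mono2 sum_mono) auto
      finally show False using A by (simp add: mult.commute mult.left_commute)
    qed
    then show ?thesis using that by (auto simp: Pairs_def)
  qed
  define Bs where "Bs = Bp (i,j)"
  define P where "P = k^(2*r) + 1"
  have cardB: "card B = n - 2*k*r" by (simp add: B_def)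
  have "4*k*(r*(P+t-4)) = 4*k*r*(k^(2*r)+t-3)" using t by (simp add: P_def)
  also have "\<dots> \<le> card B" using nbig cardB by simp
  also have "\<dots> \<le> 4*k*card Bs" using big by (simp add: Bs_def)
  finally have cBs: "r*(P+t-4) \<le> card Bs" using k by simp
  have BsB: "Bs \<subseteq> B" by (auto simp: Bs_def Bp_def)
  have finBs: "finite Bs" using BsB finB finite_subset by blast
  obtain \<gamma> where \<gamma>: "bij_betw \<gamma> {0..<card Bs} Bs" using ex_bij_betw_nat_finite[OF finBs] by blast
  have \<gamma>i: "inj_on \<gamma> {..<card Bs}" and \<gamma>s: "\<gamma> ` {..<card Bs} = Bs"
    using \<gamma> by (auto simp: bij_betw_def atLeast0LessThan)
  define \<beta> where "\<beta> x = (if x < 2*k*r then x else \<gamma> (x - 2*k*r))" for x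
  define M where "M = 2*k + (P+t-4)"
  define blk where "blk l = \<beta> ` {r*l..<r*l+r}" for l
  have Mr: "M*r \<le> 2*k*r + card Bs" using cBs by (simp add: M_def algebra_simps)
  have \<beta>i: "inj_on \<beta> {..<M*r}"
  proof
    fix x y assume x: "x \<in> {..<M*r}" and y: "y \<in> {..<M*r}" and e: "\<beta> x = \<beta> y"
    have g1: "x \<ge> 2*k*r \<Longrightarrow> \<gamma> (x - 2*k*r) \<in> B" using x Mr \<gamma>s BsB by auto
    have g2: "y \<ge> 2*k*r \<Longrightarrow> \<gamma> (y - 2*k*r) \<in> B" using y Mr \<gamma>s BsB by auto
    show "x = y"
    proof (cases "x < 2*k*r"; cases "y < 2*k*r")
      assume "x < 2*k*r" "y < 2*k*r" then show ?thesis using e by (simp add: \<beta>_def)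
    next
      assume "x < 2*k*r" "\<not> y < 2*k*r" then show ?thesis using e g2 by (auto simp: \<beta>_def B_def)
    next
      assume "\<not> x < 2*k*r" "y < 2*k*r" then show ?thesis using e g1 by (auto simp: \<beta>_def B_def)
    next
      assume a: "\<not> x < 2*k*r" "\<not> y < 2*k*r"
      then have "\<gamma> (x - 2*k*r) = \<gamma> (y - 2*k*r)" using e by (simp add: \<beta>_def)
      moreover have "x - 2*k*r < card Bs" "y - 2*k*r < card Bs" using x y Mr a by auto
      ultimately have "x - 2*k*r = y - 2*k*r" using \<gamma>i by (auto simp: inj_on_def)
      then show ?thesis using a by simp
    qed
  qed
  have \<beta>s: "\<beta> ` {..<M*r} \<subseteq> {..<n}"
  proof
    fix y assume "y \<in> \<beta> ` {..<M*r}"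
    then obtain x where x: "x < M*r" "y = \<beta> x" by auto
    show "y \<in> {..<n}"
    proof (cases "x < 2*k*r")
      case True then show ?thesis using x nbig by (simp add: \<beta>_def)
    next
      case False
      then have "\<gamma> (x - 2*k*r) \<in> B" using x Mr \<gamma>s BsB by auto
      then show ?thesis using x False by (auto simp: \<beta>_def B_def)
    qed
  qed
  have blk_lo: "blk l = D l" if "l < 2*k" for l
  proof -
    have "r*l + r = r*(l+1)" by simp
    also have "\<dots> \<le> r*(2*k)" using that by (intro mult_le_mono2) simp
    finally have "r*l + r \<le> 2*k*r" by (simp add: mult.commute)
    then have h: "\<And>x. x \<in> {r*l..<r*l+r} \<Longrightarrow> \<beta> x = (\<lambda>x. x) x" by (auto simp: \<beta>_def)
    have "blk l = (\<lambda>x. x) ` {r*l..<r*l+r}" unfolding blk_def by (rule image_cong[OF refl h])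
    then show ?thesis by (simp add: D_def)
  qed
  have blk_hi: "blk (2*k+a) \<subseteq> Bs" if "a < P+t-4" for a
  proof
    fix y assume "y \<in> blk (2*k+a)"
    then obtain x where x: "r*(2*k+a) \<le> x" "x < r*(2*k+a)+r" "y = \<beta> x" by (auto simp: blk_def)
    have "x < M*r" using blk_bound[of "2*k+a" M "x - r*(2*k+a)" r] x that by (simp add: M_def)
    moreover have "\<not> x < 2*k*r" using x by (simp add: algebra_simps)
    ultimately show "y \<in> Bs" using x Mr \<gamma>s by (auto simp: \<beta>_def)
  qed
  have blk_dist: "blk l1 \<noteq> blk l2" if "l1 < M" "l2 < M" "l1 \<noteq> l2" for l1 l2
  proof
    assume e: "blk l1 = blk l2"
    have "\<beta> (r*l1) \<in> blk l1" using r0 by (auto simp: blk_def)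
    then obtain y where y: "r*l2 \<le> y" "y < r*l2 + r" "\<beta> (r*l1) = \<beta> y" using e by (auto simp: blk_def)
    have "r*l1 < M*r" using blk_bound[of l1 M 0 r] that r0 by simp
    moreover have "y < M*r" using blk_bound[of l2 M "y - r*l2" r] that y by simp
    ultimately have "r*l1 = y" using \<beta>i y by (auto simp: inj_on_def)
    then have "r*l1 < r*(l2+1)" using y by simp
    then have "l1 < l2 + 1" using mult_less_cancel1 by blast
    moreover have "l2 \<le> l1" using \<open>r*l1 = y\<close> y r0 by auto
    ultimately show False using that by simp
  qed
  have blk_edge: "blk l \<in> complete_edges n r" if "l < M" for l
  proof -
    have sub: "{r*l..<r*l+r} \<subseteq> {..<M*r}"
    proof
      fix x assume x: "x \<in> {r*l..<r*l+r}"
      then have "x = r*l + (x - r*l)" "x - r*l < r" by auto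
      then show "x \<in> {..<M*r}" using blk_bound[OF that, of "x - r*l" r] by simp
    qed
    have "card (blk l) = r"
      using card_image[OF inj_on_subset[OF \<beta>i sub]] by (simp add: blk_def)
    moreover have "blk l \<subseteq> {..<n}" using sub \<beta>s by (auto simp: blk_def)
    ultimately show ?thesis by (simp add: complete_edges_def)
  qed
  define U where "U = D i \<union> D j"
  have iM: "i < M" and jM: "j < M" using ij by (auto simp: M_def)
  have Un: "U \<subseteq> {..<n}" using D_edge ij by (auto simp: U_def complete_edges_def)
  have finU: "finite U" by (simp add: U_def D_def)
  have cU: "card U \<le> 2*r"
  proof -
    have "card U \<le> card (D i) + card (D j)" unfolding U_def by (rule card_Un_le)
    then show ?thesis by (simp add: D_def)
  qed
  define g where "g a = restrict (\<lambda>u. f u (blk (2*k+a))) U" for a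
  have gin: "g ` {..<P} \<subseteq> U \<rightarrow>\<^sub>E {..<k}"
  proof
    fix h assume "h \<in> g ` {..<P}"
    then obtain a where a: "a < P" "h = g a" by auto
    have "2*k+a < M" using a t by (simp add: M_def)
    then have "blk (2*k+a) \<in> complete_edges n r" by (rule blk_edge)
    then show "h \<in> U \<rightarrow>\<^sub>E {..<k}" using a fbound Un by (auto simp: g_def)
  qed
  have "card (U \<rightarrow>\<^sub>E {..<k}) = k ^ card U" using card_funcsetE[OF finU, of "{..<k}"] card_lessThan[of k] by (simp only:)
  also have "\<dots> \<le> k^(2*r)" using cU k by (intro power_increasing) auto
  finally have cPi: "card (U \<rightarrow>\<^sub>E {..<k}) < P" by (simp add: P_def)
  have "\<not> inj_on g {..<P}"
  proof
    assume "inj_on g {..<P}"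
    then have "card {..<P} \<le> card (U \<rightarrow>\<^sub>E {..<k})"
      by (rule card_inj_on_le[OF _ gin]) (auto intro: finite_PiE finU)
    then show False using cPi by simp
  qed
  then have "\<exists>a\<in>{..<P}. \<exists>b\<in>{..<P}. g a = g b \<and> a \<noteq> b" unfolding inj_on_def by blast
  then obtain a b where ab: "a < P" "b < P" "a \<noteq> b" "g a = g b" by blast
  have sameU: "f u (blk (2*k+a)) = f u (blk (2*k+b))" if "u \<in> U" for u
    using fun_cong[OF ab(4), of u] that by (simp add: g_def)
  define \<sigma> where "\<sigma> l = (if l = 0 then i else if l = 1 then j else if l = 2 then 2*k+a
      else if l = 3 then 2*k+b else 2*k+(P+(l-4)))" for l
  have \<sigma>i: "inj_on \<sigma> {..<t}"
  proof
    fix x y assume "x \<in> {..<t}" "y \<in> {..<t}" "\<sigma> x = \<sigma> y"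
    then show "x = y" using ij ab unfolding \<sigma>_def by (auto split: if_splits)
  qed
  have \<sigma>s: "\<sigma> ` {..<t} \<subseteq> {..<M}"
    using ij ab t by (auto simp: \<sigma>_def M_def)
  define T where "T = (\<lambda>l. blk (\<sigma> l)) ` {..<t}"
  have "is_copy n r (matching r t) T"
    unfolding T_def blk_def by (rule copy_blocks[OF r \<beta>i \<beta>s \<sigma>i \<sigma>s])
  then obtain u where u: "u \<in> hverts T" and inj: "inj_on (f u) T" using copyprop by blast
  then obtain l where l: "l < t" "u \<in> blk (\<sigma> l)" by (auto simp: hverts_def T_def)
  show False
  proof (cases "l \<le> 1")
    case True
    then have "\<sigma> l = i \<or> \<sigma> l = j" by (cases "l = 0") (simp_all add: \<sigma>_def)
    moreover have "blk i = D i" "blk j = D j" using blk_lo ij by simp_all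
    ultimately have "u \<in> D i \<or> u \<in> D j" using l(2) by auto
    then have uU: "u \<in> U" by (simp add: U_def)
    have m: "blk (\<sigma> 2) \<in> T" "blk (\<sigma> 3) \<in> T" unfolding T_def
      by (rule rev_image_eqI[of 2], use t in simp, simp) (rule rev_image_eqI[of 3], use t in simp, simp)
    have s23: "\<sigma> 2 = 2*k+a" "\<sigma> 3 = 2*k+b" by (simp_all add: \<sigma>_def)
    have m2: "blk (2*k+a) \<in> T" "blk (2*k+b) \<in> T" using m s23 by simp_all
    have "blk (2*k+a) = blk (2*k+b)" by (rule inj_onD[OF inj sameU[OF uU] m2])
    moreover have "blk (2*k+a) \<noteq> blk (2*k+b)" by (rule blk_dist) (use ab t in \<open>auto simp: M_def\<close>)
    ultimately show False by simp
  next
    case False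
    have "\<exists>a'. a' < P+t-4 \<and> \<sigma> l = 2*k+a'"
    proof (cases "l = 2 \<or> l = 3")
      case True
      then show ?thesis
      proof
        assume "l = 2" then show ?thesis using ab(1) t by (intro exI[of _ a]) (simp add: \<sigma>_def)
      next
        assume "l = 3" then show ?thesis using ab(2) t by (intro exI[of _ b]) (simp add: \<sigma>_def)
      qed
    next
      case c: False
      then have "\<sigma> l = 2*k+(P+(l-4))" using False by (simp add: \<sigma>_def)
      moreover have l4: "4 \<le> l" using c False by auto
      moreover have "P+(l-4) < P+t-4" using l(1) l4 by arith
      ultimately show ?thesis by blast
    qed
    then obtain a' where a': "a' < P+t-4" "\<sigma> l = 2*k+a'" by blast
    have "u \<in> blk (2*k+a')" using l(2) a'(2) by simp
    then have "u \<in> Bs" using blk_hi[OF a'(1)] by blast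
    then have fe: "f u (D i) = f u (D j)" by (simp add: Bs_def Bp_def)
    have m: "blk (\<sigma> 0) \<in> T" "blk (\<sigma> 1) \<in> T" unfolding T_def
      by (rule rev_image_eqI[of 0], use t in simp, simp) (rule rev_image_eqI[of 1], use t in simp, simp)
    have s01: "\<sigma> 0 = i" "\<sigma> 1 = j" by (simp_all add: \<sigma>_def)
    have m2: "D i \<in> T" "D j \<in> T" using m s01 blk_lo ij by simp_all
    have "D i = D j" by (rule inj_onD[OF inj fe m2])
    moreover have "blk i \<noteq> blk j" by (rule blk_dist) (use ij iM jM in auto)
    ultimately show False using blk_lo ij by simp
  qed
qed

lemma exists_coloring: "t \<ge> 1 \<Longrightarrow> r \<ge> 1 \<Longrightarrow> \<exists>k f. local_coloring n r (matching r t) k f"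
proof -
  assume t: "t \<ge> 1" and r: "r \<ge> 1"
  have fin: "finite (complete_edges n r)"
    by (rule finite_subset[of _ "Pow {..<n}"]) (auto simp: complete_edges_def)
  obtain g where g: "bij_betw g (complete_edges n r) {0..<card (complete_edges n r)}"
    using ex_bij_betw_finite_nat[OF fin] by blast
  define f where "f v e = g e" for v :: nat and e
  have A: "\<forall>v<n. \<forall>e\<in>complete_edges n r. f v e < card (complete_edges n r)"
    using g by (auto simp: f_def bij_betw_def)
  have B: "\<exists>u\<in>hverts T. inj_on (f u) T" if T: "is_copy n r (matching r t) T" for T
  proof -
    from T obtain \<phi> where T1: "T \<subseteq> complete_edges n r" and T2: "T = (\<lambda>e. \<phi> ` e) ` matching r t"
      unfolding is_copy_def by blast
    have "inj_on g T" using g T1 by (auto simp: bij_betw_def intro: inj_on_subset)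
    then have inj: "inj_on (f u) T" for u by (simp add: inj_on_def f_def)
    have "{0..<r} \<in> matching r t" using t unfolding matching_def
      by (rule_tac rev_image_eqI[of 0]) auto
    then have "\<phi> ` {0..<r} \<in> T" using T2 by blast
    moreover have "\<phi> 0 \<in> \<phi> ` {0..<r}" using r by auto
    ultimately have "\<phi> 0 \<in> hverts T" by (auto simp: hverts_def)
    then show ?thesis using inj by blast
  qed
  show ?thesis unfolding local_coloring_def using A B by blast
qed

lemma bound_le: "(k::nat) \<ge> 1 \<Longrightarrow> 2*k*r + 4*k*r*(k^(2*r)+t-3) \<le> (6*r + 4*r*t) * k^(2*r+1)"
proof -
  assume k: "k \<ge> 1"
  have kp: "k \<le> k^(2*r+1)" using k by (metis One_nat_def le_add2 power_increasing power_one_right)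
  have e: "k * k^(2*r) = k^(2*r+1)" by simp
  have "2*k*r + 4*k*r*(k^(2*r)+t-3) \<le> 2*k*r + 4*k*r*(k^(2*r)+t)"
    by (intro add_le_mono le_refl mult_le_mono2) simp
  also have "\<dots> = 2*r*k + 4*r*(k*k^(2*r)) + 4*r*t*k" by (simp add: algebra_simps)
  also have "\<dots> = 2*r*k + 4*r*k^(2*r+1) + 4*r*t*k" by (simp only: e)
  also have "\<dots> \<le> 2*r*k^(2*r+1) + 4*r*k^(2*r+1) + 4*r*t*k^(2*r+1)"
    using kp by (intro add_le_mono mult_le_mono2 le_refl)
  also have "\<dots> = (6*r + 4*r*t) * k^(2*r+1)" by (simp add: algebra_simps)
  finally show ?thesis .
qed

theorem corollary1:
  fixes t r :: nat
  assumes "t \<ge> 4" and "r \<ge> 3"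
  shows "\<exists>c>0. \<exists>N. \<forall>n\<ge>N.
           real (C_local r n (matching r t)) \<ge> c * real n powr (1 / (2 * real r + 1))"
proof -
  define L where "L = 6*r + 4*r*t"
  define q where "q = 2 * real r + 1"
  have "L > 0" using assms by (simp add: L_def)
  then have Lpos: "real L > 0" by simp
  have qpos: "q > 0" by (simp add: q_def)
  define c where "c = 1 / (real L powr (1/q))"
  have cpos: "c > 0" using Lpos by (simp add: c_def)
  have main: "real (C_local r n (matching r t)) \<ge> c * real n powr (1/q)" if n: "n \<ge> r+1" for n
  proof -
    define C where "C = C_local r n (matching r t)"
    have ex: "\<exists>k f. local_coloring n r (matching r t) k f"
      using exists_coloring[of t r n] assms by simp
    have "\<exists>f. local_coloring n r (matching r t) C f"
      unfolding C_def C_local_def by (rule LeastI_ex[of "\<lambda>k. \<exists>f. local_coloring n r (matching r t) k f", OF ex])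
    then obtain f where lc: "local_coloring n r (matching r t) C f" by blast
    have C1: "C \<ge> 1"
    proof (rule ccontr)
      assume "\<not> C \<ge> 1" then have "C = 0" by simp
      moreover have "{..<r} \<in> complete_edges n r" using n by (auto simp: complete_edges_def)
      moreover have "0 < n" using n by simp
      ultimately show False using lc unfolding local_coloring_def by blast
    qed
    have "n < L * C^(2*r+1)"
      using no_coloring[of r t C n f] assms lc C1 bound_le[OF C1, of r t] by (simp add: L_def)
    then have ln: "real n \<le> real L * real C ^ (2*r+1)"
      by (metis less_imp_le of_nat_le_iff of_nat_mult of_nat_power)
    have Cpos: "real C > 0" using C1 by simp
    have Cq: "real C ^ (2*r+1) = real C powr q"
      using powr_realpow[OF Cpos, of "2*r+1"] by (simp add: q_def add.commute)
    have "real n powr (1/q) \<le> (real L * real C powr q) powr (1/q)"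
      using ln Cq qpos by (intro powr_mono2) auto
    also have "\<dots> = real L powr (1/q) * (real C powr q) powr (1/q)"
      using Lpos Cpos by (simp add: powr_mult)
    also have "\<dots> = real L powr (1/q) * real C"
      using qpos Cpos by (simp add: powr_powr)
    finally have "real n powr (1/q) \<le> real L powr (1/q) * real C" .
    then have "c * real n powr (1/q) \<le> c * (real L powr (1/q) * real C)"
      using cpos by (simp add: mult_left_mono)
    also have "\<dots> = real C" using Lpos by (simp add: c_def)
    finally show ?thesis by (simp add: C_def)
  qed
  show ?thesis
    using cpos main unfolding q_def by blast
qed
end
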